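(* In the two-asset bid-ask model described in the context, let $\delta^b_t=S^b_t/S^b_{t-1}$ and $\delta^a_t=S^a_t/S^a_{t-1}$. If for all $t=1,\dots,T$ and all $c>0$, $$\mathbb{P}(\delta^b_t\le c\,|\,\mathcal{F}_{t-1})\,\mathbb{P}(\delta^a_t\ge c\,|\,\mathcal{F}_{t-1})>0\quad\text{a.s.},$$ then (NA2) holds.
   Context: $(\Omega,\mathcal{F},(\mathcal{F}_t)_{t=0,\dots,T},\mathbb{P})$ filtered complete probability space, $\mathcal{F}_0$ trivial. $d=2$. For each $t$, $S^b_t,S^a_t$ are $\mathcal{F}_t$-measurable random variables with $0<S^b_t\le S^a_t$ a.s., and the solvency cone is $\mathbf{K}_t=\{x\in\mathbb{R}^2:\ x_1+y\,x_2\ge0\ \text{for all }y\in[S^b_t,S^a_t]\}$. $L^0(\Gamma,\mathcal{F}_t)$: $\mathcal{F}_t$-measurable random vectors a.s. in $\Gamma$. $\mathsf{A}_{t,T}=\sum_{u=t}^TL^0(-\mathbf{K}_u,\mathcal{F}_u)$. (NA2): for every $t$ and $\eta_t\in L^0(\mathbb{R}^2,\mathcal{F}_t)$, if $(\eta_t+\mathsf{A}_{t,T})\cap L^0(\mathbf{K}_T,\mathcal{F}_T)\neq\emptyset$ then $\eta_t\in L^0(\mathbf{K}_t,\mathcal{F}_t)$. *)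

theory Defs
  imports "HOL-Probability.Probability"
begin

definition solvency_cone :: "(nat \<Rightarrow> 'a \<Rightarrow> real) \<Rightarrow> (nat \<Rightarrow> 'a \<Rightarrow> real) \<Rightarrow> nat \<Rightarrow> 'a \<Rightarrow> (real \<times> real) set" where
  "solvency_cone Sb Sa t w = {x. \<forall>y\<in>{Sb t w..Sa t w}. fst x + y * snd x \<ge> 0}"

definition L0 :: "'a measure \<Rightarrow> 'a measure \<Rightarrow> ('a \<Rightarrow> (real \<times> real) set) \<Rightarrow> ('a \<Rightarrow> real \<times> real) set" where
  "L0 M Fu G = {X. X \<in> borel_measurable Fu \<and> (AE w in M. X w \<in> G w)}"

definition A_set :: "'a measure \<Rightarrow> (nat \<Rightarrow> 'a measure) \<Rightarrow> (nat \<Rightarrow> 'a \<Rightarrow> real) \<Rightarrow> (nat \<Rightarrow> 'a \<Rightarrow> real)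
    \<Rightarrow> nat \<Rightarrow> nat \<Rightarrow> ('a \<Rightarrow> real \<times> real) set" where
  "A_set M F Sb Sa t T = {X. \<exists>\<xi> :: nat \<Rightarrow> 'a \<Rightarrow> real \<times> real.
      (\<forall>u\<in>{t..T}. \<xi> u \<in> L0 M (F u) (\<lambda>w. uminus ` solvency_cone Sb Sa u w))
      \<and> X = (\<lambda>w. \<Sum>u=t..T. \<xi> u w)}"

definition NA2 :: "'a measure \<Rightarrow> (nat \<Rightarrow> 'a measure) \<Rightarrow> (nat \<Rightarrow> 'a \<Rightarrow> real) \<Rightarrow> (nat \<Rightarrow> 'a \<Rightarrow> real)
    \<Rightarrow> nat \<Rightarrow> bool" where
  "NA2 M F Sb Sa T \<longleftrightarrow> (\<forall>t\<le>T. \<forall>\<eta>. \<eta> \<in> borel_measurable (F t) \<longrightarrow>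
      (\<exists>X\<in>A_set M F Sb Sa t T. (\<lambda>w. \<eta> w + X w) \<in> L0 M (F T) (solvency_cone Sb Sa T))
      \<longrightarrow> \<eta> \<in> L0 M (F t) (solvency_cone Sb Sa t))"

end

theory Submission
  imports Defs
begin

lemma ce_zero_on:
  assumes P: "prob_space M" and S: "subalgebra M G" and A: "A \<in> sets M" and B: "B \<in> sets G"
    and dis: "AE w in M. w \<in> B \<longrightarrow> w \<notin> A"
    and nz: "AE w in M. real_cond_exp M G (indicator A) w \<noteq> 0"
  shows "AE w in M. w \<notin> B"
proof -
  interpret prob_space M by (rule P)
  interpret finite_measure_subalgebra M G
    by unfold_locales (rule S)
  have BM: "B \<in> sets M" using B S by (auto simp: subalgebra_def)
  have int: "integrable M (indicator A :: _ \<Rightarrow> real)"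
    using A by (simp add: integrable_indicator_iff less_top[symmetric])
  have "(\<integral>x\<in>B. indicator A x \<partial>M) = (\<integral>x\<in>B. real_cond_exp M G (indicator A) x \<partial>M)"
    by (rule real_cond_exp_intA[OF int B])
  moreover have "(\<integral>x\<in>B. (indicator A x :: real) \<partial>M) = 0"
    unfolding set_lebesgue_integral_def
    by (rule integral_eq_zero_AE) (use dis in \<open>auto simp: indicator_def\<close>)
  ultimately have z: "(\<integral>x. indicator B x * real_cond_exp M G (indicator A) x \<partial>M) = 0"
    unfolding set_lebesgue_integral_def by simp
  have pos: "AE x in M. real_cond_exp M G (indicator A) x \<ge> 0"
    by (rule real_cond_exp_pos) (use A in auto)
  have int2: "integrable M (\<lambda>x. indicator B x * real_cond_exp M G (indicator A) x)"
    using integrable_mult_indicator[OF BM real_cond_exp_int(1)[OF int]] by simp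
  have "AE x in M. indicator B x * real_cond_exp M G (indicator A) x = 0"
  proof -
    have "AE x in M. 0 \<le> indicator B x * real_cond_exp M G (indicator A) x"
      using pos by eventually_elim (auto simp: indicator_def)
    then show ?thesis using integral_nonneg_eq_0_iff_AE[OF int2] z by simp
  qed
  then show ?thesis using nz by eventually_elim (auto simp: indicator_def split: if_splits)
qed

lemma dense_b:
  fixes z1 a :: real
  assumes "0 < a" "z1 + a < 0"
  shows "\<exists>q::rat. 0 < real_of_rat q \<and> z1 + real_of_rat q * a < 0"
proof -
  have "1 < -z1 / a" using assms by (simp add: field_simps)
  then obtain r where r: "r \<in> \<rat>" "1 < r" "r < -z1/a" using Rats_dense_in_real by blast
  then obtain q where q: "r = real_of_rat q" by (auto elim: Rats_cases)
  have "r * a < -z1" using r(3) assms(1) by (simp add: field_simps)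
  then show ?thesis using q r by (intro exI[of _ q]) auto
qed

lemma dense_a:
  fixes z1 a :: real
  assumes "a < 0" "z1 + a < 0"
  shows "\<exists>q::rat. 0 < real_of_rat q \<and> z1 + real_of_rat q * a < 0"
proof -
  have "max 0 (-z1 / a) < 1" using assms by (simp add: field_simps)
  then obtain r where r: "r \<in> \<rat>" "max 0 (-z1/a) < r" "r < 1" using Rats_dense_in_real by blast
  then obtain q where q: "r = real_of_rat q" by (auto elim: Rats_cases)
  have "-z1/a < r" using r by simp
  then have "r * a < -z1" using assms(1) by (simp add: field_simps)
  then show ?thesis using q r by (intro exI[of _ q]) auto
qed

lemma one_step:
  fixes Sbp Sap Sbn San z1 z2 :: "'a \<Rightarrow> real"
  assumes P: "prob_space M" and S: "subalgebra M G"
    and Sbp[measurable]: "Sbp \<in> borel_measurable G" and Sap[measurable]: "Sap \<in> borel_measurable G"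
    and Sbn[measurable]: "Sbn \<in> borel_measurable M" and San[measurable]: "San \<in> borel_measurable M"
    and posp: "AE w in M. 0 < Sbp w \<and> Sbp w \<le> Sap w"
    and posn: "AE w in M. 0 < Sbn w \<and> Sbn w \<le> San w"
    and cond: "\<And>c. 0 < c \<Longrightarrow> AE w in M.
        real_cond_exp M G (indicator {v \<in> space M. Sbn v / Sbp v \<le> c}) w
      * real_cond_exp M G (indicator {v \<in> space M. San v / Sap v \<ge> c}) w > 0"
    and z1[measurable]: "z1 \<in> borel_measurable G" and z2[measurable]: "z2 \<in> borel_measurable G"
    and K: "AE w in M. z1 w + Sbn w * z2 w \<ge> 0 \<and> z1 w + San w * z2 w \<ge> 0"
  shows "AE w in M. z1 w + Sbp w * z2 w \<ge> 0 \<and> z1 w + Sap w * z2 w \<ge> 0"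
proof -
  have sp: "space G = space M" using S by (auto simp: subalgebra_def)
  have SbpM[measurable]: "Sbp \<in> borel_measurable M" by (rule measurable_from_subalg[OF S Sbp])
  have SapM[measurable]: "Sap \<in> borel_measurable M" by (rule measurable_from_subalg[OF S Sap])
  have caseb: "AE w in M. 0 < real_of_rat q \<longrightarrow>
      \<not> (z2 w > 0 \<and> z1 w + real_of_rat q * Sbp w * z2 w < 0)" for q
  proof (cases "0 < real_of_rat q")
    case False then show ?thesis by simp
  next
    case True
    define B where "B = {w \<in> space G. z2 w > 0 \<and> z1 w + real_of_rat q * Sbp w * z2 w < 0}"
    define A where "A = {v \<in> space M. Sbn v / Sbp v \<le> real_of_rat q}"
    have BG: "B \<in> sets G" unfolding B_def by measurable
    have AM: "A \<in> sets M" unfolding A_def by measurable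
    have dis: "AE w in M. w \<in> B \<longrightarrow> w \<notin> A"
      using K posp posn
    proof eventually_elim
      case (elim w)
      show ?case
      proof (intro impI notI)
        assume "w \<in> B" "w \<in> A"
        then have h: "z2 w > 0" "z1 w + real_of_rat q * Sbp w * z2 w < 0" "Sbn w / Sbp w \<le> real_of_rat q"
          unfolding A_def B_def by auto
        have "Sbn w \<le> real_of_rat q * Sbp w" using h(3) elim by (simp add: field_simps)
        then have "Sbn w * z2 w \<le> real_of_rat q * Sbp w * z2 w" using h(1) by (simp add: mult_right_mono)
        then show False using h elim by linarith
      qed
    qed
    have nz: "AE w in M. real_cond_exp M G (indicator A) w \<noteq> 0"
      using cond[OF True] unfolding A_def by eventually_elim auto
    have "AE w in M. w \<notin> B" by (rule ce_zero_on[OF P S AM BG dis nz])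
    then show ?thesis using True AE_space[of M] by eventually_elim (auto simp: B_def sp)
  qed
  have casea: "AE w in M. 0 < real_of_rat q \<longrightarrow>
      \<not> (z2 w < 0 \<and> z1 w + real_of_rat q * Sap w * z2 w < 0)" for q
  proof (cases "0 < real_of_rat q")
    case False then show ?thesis by simp
  next
    case True
    define B where "B = {w \<in> space G. z2 w < 0 \<and> z1 w + real_of_rat q * Sap w * z2 w < 0}"
    define A where "A = {v \<in> space M. San v / Sap v \<ge> real_of_rat q}"
    have BG: "B \<in> sets G" unfolding B_def by measurable
    have AM: "A \<in> sets M" unfolding A_def by measurable
    have dis: "AE w in M. w \<in> B \<longrightarrow> w \<notin> A"
      using K posp posn
    proof eventually_elim
      case (elim w)
      show ?case
      proof (intro impI notI)
        assume "w \<in> B" "w \<in> A"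
        then have h: "z2 w < 0" "z1 w + real_of_rat q * Sap w * z2 w < 0" "San w / Sap w \<ge> real_of_rat q"
          unfolding A_def B_def by auto
        have "San w \<ge> real_of_rat q * Sap w" using h(3) elim by (simp add: field_simps)
        then have "San w * z2 w \<le> real_of_rat q * Sap w * z2 w" using h(1) by (simp add: mult_right_mono_neg)
        then show False using h elim by linarith
      qed
    qed
    have nz: "AE w in M. real_cond_exp M G (indicator A) w \<noteq> 0"
      using cond[OF True] unfolding A_def by eventually_elim auto
    have "AE w in M. w \<notin> B" by (rule ce_zero_on[OF P S AM BG dis nz])
    then show ?thesis using True AE_space[of M] by eventually_elim (auto simp: B_def sp)
  qed
  have allb: "AE w in M. \<forall>q::rat. 0 < real_of_rat q \<longrightarrow>
      \<not> (z2 w > 0 \<and> z1 w + real_of_rat q * Sbp w * z2 w < 0)"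
    using caseb by (simp add: AE_all_countable)
  have alla: "AE w in M. \<forall>q::rat. 0 < real_of_rat q \<longrightarrow>
      \<not> (z2 w < 0 \<and> z1 w + real_of_rat q * Sap w * z2 w < 0)"
    using casea by (simp add: AE_all_countable)
  show ?thesis using allb alla K posp posn
  proof eventually_elim
    case (elim w)
    consider "z2 w > 0" | "z2 w < 0" | "z2 w = 0" by linarith
    then show ?case
    proof cases
      case 1
      have "z1 w + Sbp w * z2 w \<ge> 0"
      proof (rule ccontr)
        assume "\<not> ?thesis"
        then obtain q where "0 < real_of_rat q" "z1 w + real_of_rat q * (Sbp w * z2 w) < 0"
          using dense_b[of "Sbp w * z2 w" "z1 w"] 1 elim by auto
        then show False using elim 1 by (auto simp: mult.assoc)
      qed
      moreover have "Sbp w * z2 w \<le> Sap w * z2 w" using 1 elim by (simp add: mult_right_mono)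
      ultimately show ?thesis by linarith
    next
      case 2
      have "z1 w + Sap w * z2 w \<ge> 0"
      proof (rule ccontr)
        assume "\<not> ?thesis"
        then obtain q where "0 < real_of_rat q" "z1 w + real_of_rat q * (Sap w * z2 w) < 0"
          using dense_a[of "Sap w * z2 w" "z1 w"] 2 elim by (auto simp: mult_pos_neg)
        then show False using elim 2 by (auto simp: mult.assoc)
      qed
      moreover have "Sbp w * z2 w \<ge> Sap w * z2 w" using 2 elim by (simp add: mult_right_mono_neg)
      ultimately show ?thesis by linarith
    next
      case 3 then show ?thesis using elim by simp
    qed
  qed
qed

lemma cone_char:
  assumes "Sb t w \<le> Sa t w"
  shows "x \<in> solvency_cone Sb Sa t w \<longleftrightarrow>
    fst x + Sb t w * snd x \<ge> 0 \<and> fst x + Sa t w * snd x \<ge> 0"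
proof
  assume "x \<in> solvency_cone Sb Sa t w"
  then show "fst x + Sb t w * snd x \<ge> 0 \<and> fst x + Sa t w * snd x \<ge> 0"
    using assms unfolding solvency_cone_def by auto
next
  assume h: "fst x + Sb t w * snd x \<ge> 0 \<and> fst x + Sa t w * snd x \<ge> 0"
  show "x \<in> solvency_cone Sb Sa t w"
    unfolding solvency_cone_def
  proof (intro CollectI ballI)
    fix y assume y: "y \<in> {Sb t w..Sa t w}"
    show "fst x + y * snd x \<ge> 0"
    proof (cases "snd x \<ge> 0")
      case True
      then have "Sb t w * snd x \<le> y * snd x" using y by (simp add: mult_right_mono)
      then show ?thesis using h by linarith
    next
      case False
      then have "Sa t w * snd x \<le> y * snd x" using y by (simp add: mult_right_mono_neg)
      then show ?thesis using h by linarith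
    qed
  qed
qed

lemma cone_add:
  assumes "x \<in> solvency_cone Sb Sa t w" "y \<in> solvency_cone Sb Sa t w"
  shows "x + y \<in> solvency_cone Sb Sa t w"
  using assms unfolding solvency_cone_def
  by (auto simp: algebra_simps intro!: add_nonneg_nonneg[of "fst x + _ * snd x" "fst y + _ * snd y", simplified algebra_simps])

lemma neg_cone: "(x::real\<times>real) \<in> uminus ` S \<Longrightarrow> - x \<in> S"
  by auto

theorem corollary9p4:
  fixes M :: "'a measure" and F :: "nat \<Rightarrow> 'a measure" and T :: nat
    and Sb Sa :: "nat \<Rightarrow> 'a \<Rightarrow> real"
  assumes prob: "prob_space M"
    and complete: "\<And>A B. B \<in> null_sets M \<Longrightarrow> A \<subseteq> B \<Longrightarrow> A \<in> sets M"
    and sub: "\<And>t. t \<le> T \<Longrightarrow> subalgebra M (F t)"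
    and filt: "\<And>s t. s \<le> t \<Longrightarrow> t \<le> T \<Longrightarrow> sets (F s) \<subseteq> sets (F t)"
    and F_null: "\<And>N. N \<in> null_sets M \<Longrightarrow> N \<in> sets (F 0)"
    and F0_trivial: "\<And>A. A \<in> sets (F 0) \<Longrightarrow> measure M A = 0 \<or> measure M A = 1"
    and Sb_meas: "\<And>t. t \<le> T \<Longrightarrow> Sb t \<in> borel_measurable (F t)"
    and Sa_meas: "\<And>t. t \<le> T \<Longrightarrow> Sa t \<in> borel_measurable (F t)"
    and S_pos: "\<And>t. t \<le> T \<Longrightarrow> AE w in M. 0 < Sb t w \<and> Sb t w \<le> Sa t w"
    and cond: "\<And>t c. 1 \<le> t \<Longrightarrow> t \<le> T \<Longrightarrow> 0 < c \<Longrightarrow>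
      AE w in M.
        real_cond_exp M (F (t - 1)) (indicator {v \<in> space M. Sb t v / Sb (t - 1) v \<le> c}) w
      * real_cond_exp M (F (t - 1)) (indicator {v \<in> space M. Sa t v / Sa (t - 1) v \<ge> c}) w > 0"
  shows "NA2 M F Sb Sa T"
proof -
  let ?K = "solvency_cone Sb Sa"
  define P where "P t \<longleftrightarrow> (\<forall>\<eta> \<xi>. \<eta> \<in> borel_measurable (F t) \<longrightarrow>
     (\<forall>u\<in>{t..T}. \<xi> u \<in> L0 M (F u) (\<lambda>w. uminus ` ?K u w)) \<longrightarrow>
     (AE w in M. \<eta> w + (\<Sum>u=t..T. \<xi> u w) \<in> ?K T w) \<longrightarrow>
     (AE w in M. \<eta> w \<in> ?K t w))" for t
  have step: "AE w in M. \<zeta> w \<in> ?K t w"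
    if t: "Suc t \<le> T" and zm: "\<zeta> \<in> borel_measurable (F t)" and zK: "AE w in M. \<zeta> w \<in> ?K (Suc t) w"
    for t \<zeta>
  proof -
    have St: "subalgebra M (F t)" using sub t by simp
    have 1: "AE w in M. fst (\<zeta> w) + Sb t w * snd (\<zeta> w) \<ge> 0 \<and> fst (\<zeta> w) + Sa t w * snd (\<zeta> w) \<ge> 0"
    proof (rule one_step[OF prob St, where Sbn = "Sb (Suc t)" and San = "Sa (Suc t)"])
      show "Sb t \<in> borel_measurable (F t)" "Sa t \<in> borel_measurable (F t)" using t Sb_meas Sa_meas by auto
      show "Sb (Suc t) \<in> borel_measurable M" "Sa (Suc t) \<in> borel_measurable M"
        using t Sb_meas Sa_meas sub measurable_from_subalg by blast+
      show "AE w in M. 0 < Sb t w \<and> Sb t w \<le> Sa t w" using S_pos t by simp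
      show "AE w in M. 0 < Sb (Suc t) w \<and> Sb (Suc t) w \<le> Sa (Suc t) w" using S_pos t by simp
      show "AE w in M. real_cond_exp M (F t) (indicator {v \<in> space M. Sb (Suc t) v / Sb t v \<le> c}) w
          * real_cond_exp M (F t) (indicator {v \<in> space M. Sa (Suc t) v / Sa t v \<ge> c}) w > 0"
        if "0 < c" for c using cond[of "Suc t" c] that t by simp
      show "(\<lambda>w. fst (\<zeta> w)) \<in> borel_measurable (F t)" "(\<lambda>w. snd (\<zeta> w)) \<in> borel_measurable (F t)"
        using measurable_compose[OF zm borel_measurable_continuous_onI[OF continuous_on_fst[OF continuous_on_id]]]
          measurable_compose[OF zm borel_measurable_continuous_onI[OF continuous_on_snd[OF continuous_on_id]]]
        by (auto simp: o_def)
      show "AE w in M. fst (\<zeta> w) + Sb (Suc t) w * snd (\<zeta> w) \<ge> 0 \<and> fst (\<zeta> w) + Sa (Suc t) w * snd (\<zeta> w) \<ge> 0"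
        using zK S_pos[OF t] by eventually_elim (simp add: cone_char)
    qed
    show ?thesis using 1 S_pos[OF Suc_leD[OF t]] by eventually_elim (simp add: cone_char)
  qed
  have main: "P (T - n)" if "n \<le> T" for n
    using that
  proof (induction n)
    case 0
    show ?case unfolding P_def
    proof (intro allI impI)
      fix \<eta> \<xi>
      assume "\<forall>u\<in>{T - 0..T}. \<xi> u \<in> L0 M (F u) (\<lambda>w. uminus ` ?K u w)"
        and h: "AE w in M. \<eta> w + (\<Sum>u=T - 0..T. \<xi> u w) \<in> ?K T w"
      then have "AE w in M. \<xi> T w \<in> uminus ` ?K T w" by (auto simp: L0_def)
      then show "AE w in M. \<eta> w \<in> ?K (T - 0) w" using h
      proof eventually_elim
        case (elim w)
        have a: "\<eta> w + \<xi> T w \<in> ?K T w" using elim by simp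
        have b: "- \<xi> T w \<in> ?K T w" using elim neg_cone by blast
        have "(\<eta> w + \<xi> T w) + (- \<xi> T w) \<in> ?K T w" by (rule cone_add[OF a b])
        then show ?case by simp
      qed
    qed
  next
    case (Suc n)
    define t where "t = T - Suc n"
    have tT: "Suc t \<le> T" and tn: "T - n = Suc t" using Suc.prems by (auto simp: t_def)
    have IH: "P (Suc t)" using Suc tn by simp
    show ?case unfolding t_def[symmetric] unfolding P_def
    proof (intro allI impI)
      fix \<eta> \<xi>
      assume em: "\<eta> \<in> borel_measurable (F t)"
        and xi: "\<forall>u\<in>{t..T}. \<xi> u \<in> L0 M (F u) (\<lambda>w. uminus ` ?K u w)"
        and h: "AE w in M. \<eta> w + (\<Sum>u=t..T. \<xi> u w) \<in> ?K T w"
      define \<eta>' where "\<eta>' = (\<lambda>w. \<eta> w + \<xi> t w)"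
      have xit: "\<xi> t \<in> borel_measurable (F t)" "AE w in M. \<xi> t w \<in> uminus ` ?K t w"
        using xi tT by (auto simp: L0_def)
      have em': "\<eta>' \<in> borel_measurable (F t)" unfolding \<eta>'_def using em xit(1) by measurable
      have sa: "subalgebra (F (Suc t)) (F t)"
        using sub[of t] sub[OF tT] filt[of t "Suc t"] tT by (auto simp: subalgebra_def)
      have em'': "\<eta>' \<in> borel_measurable (F (Suc t))" by (rule measurable_from_subalg[OF sa em'])
      have sumeq: "(\<Sum>u=t..T. \<xi> u w) = \<xi> t w + (\<Sum>u=Suc t..T. \<xi> u w)" for w
        using tT by (simp add: sum.atLeast_Suc_atMost)
      have "AE w in M. \<eta>' w \<in> ?K (Suc t) w"
        using IH unfolding P_def
      proof (elim allE impE)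
        show "\<eta>' \<in> borel_measurable (F (Suc t))" by (rule em'')
        show "\<forall>u\<in>{Suc t..T}. \<xi> u \<in> L0 M (F u) (\<lambda>w. uminus ` ?K u w)" using xi by auto
        show "AE w in M. \<eta>' w + (\<Sum>u=Suc t..T. \<xi> u w) \<in> ?K T w"
          using h by (simp add: sumeq \<eta>'_def add.assoc)
      qed
      then have "AE w in M. \<eta>' w \<in> ?K t w" by (rule step[OF tT em'])
      then show "AE w in M. \<eta> w \<in> ?K t w" using xit(2)
      proof eventually_elim
        case (elim w)
        have b: "- \<xi> t w \<in> ?K t w" using elim neg_cone by blast
        have "\<eta>' w + (- \<xi> t w) \<in> ?K t w" by (rule cone_add[OF _ b]) (use elim in simp)
        then show ?case by (simp add: \<eta>'_def)
      qed
    qed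
  qed
  show ?thesis unfolding NA2_def
  proof (intro allI impI)
    fix t \<eta>
    assume tT: "t \<le> T" and em: "\<eta> \<in> borel_measurable (F t)"
      and ex: "\<exists>X\<in>A_set M F Sb Sa t T. (\<lambda>w. \<eta> w + X w) \<in> L0 M (F T) (?K T)"
    then obtain X where X: "X \<in> A_set M F Sb Sa t T" and hX: "(\<lambda>w. \<eta> w + X w) \<in> L0 M (F T) (?K T)"
      by blast
    from X obtain \<xi> where xi: "\<forall>u\<in>{t..T}. \<xi> u \<in> L0 M (F u) (\<lambda>w. uminus ` ?K u w)"
      and Xd: "X = (\<lambda>w. \<Sum>u=t..T. \<xi> u w)"
      unfolding A_set_def by blast
    have h: "AE w in M. \<eta> w + (\<Sum>u=t..T. \<xi> u w) \<in> ?K T w"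
      using hX unfolding L0_def Xd by blast
    have "P t" using main[of "T - t"] tT by simp
    then have "AE w in M. \<eta> w \<in> ?K t w" using em xi h unfolding P_def by (elim allE impE)
    then show "\<eta> \<in> L0 M (F t) (?K t)" using em by (simp add: L0_def)
  qed
qed

end
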